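(* Let $M(C,\bar\xi,\pi)$ be a Myller configuration with Darboux frame $(\bar\xi,\bar\mu,\bar v)$ and invariants $G,K,T$, with $(G(s),K(s))\neq(0,0)$ for all $s$. Then: (i) if $K\equiv 0$, $C$ is a $\bar\xi$-helix iff $\sigma_\xi=\pm T/G$ is constant; (ii) if $G\equiv 0$, $C$ is a $\bar\xi$-helix iff $\sigma_\xi=\pm T/K$ is constant; (iii) if $T\equiv 0$, $C$ is a $\bar\xi$-helix iff $\sigma_\xi=\mp\dfrac{G'K-GK'}{(G^2+K^2)^{3/2}}$ is constant.
   Context: Let $C$ be a smooth curve in Euclidean 3-space $E^3$ parametrized by arclength $s$; primes denote $d/ds$. A Myller configuration $M(C,\bar\xi,\pi)$ consists of a smooth unit vector field $\bar\xi(s)$ along $C$ and a smooth field of oriented planes $\pi(s)$ with $\bar\xi(s)\in\pi(s)$. Let $\bar v(s)$ be the unit normal of $\pi(s)$ and $\bar\mu=\bar v\times\bar\xi$. The Darboux frame satisfies $\bar\xi'=G\bar\mu+K\bar v$, $\bar\mu'=-G\bar\xi+T\bar v$, $\bar v'=-K\bar\xi-T\bar\mu$. $C$ is a $\bar\xi$-helix in $M$ if there are a constant unit vector $\bar d_\xi$ and a constant $\theta$ with $\langle\bar\xi,\bar d_\xi\rangle=\cos\theta$ along $C$. *)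

theory Defs
  imports "HOL-Analysis.Analysis"
begin

definition smooth_real_on :: "real set \<Rightarrow> (real \<Rightarrow> real) \<Rightarrow> bool" where
  "smooth_real_on I f \<longleftrightarrow> (\<forall>n. \<forall>s\<in>I. ((deriv ^^ n) f) field_differentiable (at s))"

definition smooth_vec_on :: "real set \<Rightarrow> (real \<Rightarrow> real^3) \<Rightarrow> bool" where
  "smooth_vec_on I f \<longleftrightarrow> (\<forall>i. smooth_real_on I (\<lambda>s. f s $ i))"

text \<open>Myller configuration M(C, xi, pi) along the arclength-parametrized curve r on
the open interval I, the plane field pi being given by its unit normal v,
together with its Darboux frame (xi, mu, v) and invariants G, K, T.\<close>
definition myller_darboux ::
  "real set \<Rightarrow> (real \<Rightarrow> real^3) \<Rightarrow> (real \<Rightarrow> real^3) \<Rightarrow> (real \<Rightarrow> real^3) \<Rightarrow> (real \<Rightarrow> real^3)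
   \<Rightarrow> (real \<Rightarrow> real) \<Rightarrow> (real \<Rightarrow> real) \<Rightarrow> (real \<Rightarrow> real) \<Rightarrow> bool" where
  "myller_darboux I r xi mu v G K T \<longleftrightarrow>
     is_interval I \<and> open I \<and> I \<noteq> {} \<and>
     smooth_vec_on I r \<and> smooth_vec_on I xi \<and> smooth_vec_on I v \<and>
     (\<forall>s\<in>I. norm (vector_derivative r (at s)) = 1) \<and>
     (\<forall>s\<in>I. norm (xi s) = 1 \<and> norm (v s) = 1 \<and> inner (xi s) (v s) = 0 \<and>
             mu s = cross3 (v s) (xi s)) \<and>
     (\<forall>s\<in>I. (xi has_vector_derivative (G s *\<^sub>R mu s + K s *\<^sub>R v s)) (at s) \<and>
             (mu has_vector_derivative (- G s *\<^sub>R xi s + T s *\<^sub>R v s)) (at s) \<and>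
             (v has_vector_derivative (- K s *\<^sub>R xi s - T s *\<^sub>R mu s)) (at s))"

definition xi_helix :: "real set \<Rightarrow> (real \<Rightarrow> real^3) \<Rightarrow> bool" where
  "xi_helix I xi \<longleftrightarrow> (\<exists>d theta. norm d = 1 \<and> (\<forall>s\<in>I. inner (xi s) d = cos theta))"

end

theory Submission
  imports Defs
begin


lemma inner_d: "(f has_vector_derivative f') (at s) \<Longrightarrow> ((\<lambda>t. inner (f t) (d::real^3)) has_real_derivative inner f' d) (at s)"
  unfolding has_vector_derivative_def has_field_derivative_def
  apply (rule has_derivative_eq_rhs, rule has_derivative_inner_left, assumption)
  by (simp add: fun_eq_iff)

lemma comp_d: "(f has_vector_derivative f') (at s) \<Longrightarrow> ((\<lambda>t. (f t :: real^3) $ i) has_real_derivative f' $ i) (at s)"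
  using inner_d[of f f' s "axis i 1"] by (simp add: inner_axis)

lemma span3: fixes e x v :: "real^3" assumes "norm x = 1" "norm v = 1" "inner x v = 0" "inner e x = 0" "inner e v = 0" "inner e (cross3 v x) = 0"
shows "e = 0"
proof -
  have 1: "cross3 e (cross3 v x) = (inner e x) *\<^sub>R v - (inner e v) *\<^sub>R x" by (simp add: cross3_simps forall_3)
  have "(norm (cross3 e (cross3 v x)))\<^sup>2 + (inner e (cross3 v x))\<^sup>2 = (norm e * norm (cross3 v x))\<^sup>2" by (rule norm_cross_dot)
  moreover have "(norm (cross3 v x))\<^sup>2 + (inner v x)\<^sup>2 = (norm v * norm x)\<^sup>2" by (rule norm_cross_dot)
  ultimately have "cross3 v x \<noteq> 0" "norm e * norm (cross3 v x) = 0" using assms 1 by (auto simp add: inner_commute)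
  then show ?thesis by simp
qed

lemma zero_deriv_const:
  assumes "convex I" "\<forall>s\<in>I. (f has_real_derivative 0) (at s)"
  shows "\<exists>c. \<forall>s\<in>I. f s = c"
  using assms by (intro has_field_derivative_zero_constant) (auto intro: has_field_derivative_at_within)

lemma deriv_unique_on:
  assumes "open I" "s \<in> I" "\<forall>t\<in>I. f t = g t"
    "(f has_real_derivative D1) (at s)" "(g has_real_derivative D2) (at s)"
  shows "D1 = D2"
proof -
  have "(g has_real_derivative D1) (at s)"
    using has_field_derivative_transform_within_open[OF assms(4,1,2)] assms(3) by blast
  then show ?thesis using assms(5) DERIV_unique by blast
qed

context
  fixes I r xi mu v G K T
  assumes M: "myller_darboux I r xi mu v G K T"
begin

lemma Iopen: "open I" and Iconv: "convex I" and Ine: "I \<noteq> {}"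
  using M is_interval_convex unfolding myller_darboux_def by auto

lemma orth:
  assumes "s \<in> I"
  shows "norm (xi s) = 1" "norm (v s) = 1" "norm (mu s) = 1"
    "inner (xi s) (xi s) = 1" "inner (v s) (v s) = 1" "inner (mu s) (mu s) = 1"
    "inner (xi s) (v s) = 0" "inner (v s) (xi s) = 0"
    "inner (xi s) (mu s) = 0" "inner (mu s) (xi s) = 0"
    "inner (v s) (mu s) = 0" "inner (mu s) (v s) = 0"
    "mu s = cross3 (v s) (xi s)"
proof -
  have a: "norm (xi s) = 1" "norm (v s) = 1" "inner (xi s) (v s) = 0" "mu s = cross3 (v s) (xi s)"
    using M assms unfolding myller_darboux_def by auto
  have "(norm (cross3 (v s) (xi s)))\<^sup>2 + (inner (v s) (xi s))\<^sup>2 = (norm (v s) * norm (xi s))\<^sup>2" by (rule norm_cross_dot)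
  then have "(norm (mu s))\<^sup>2 = 1" using a by (simp add: inner_commute)
  then have n: "norm (mu s) = 1" by (smt (verit) norm_ge_zero power2_eq_1_iff)
  show "norm (xi s) = 1" "norm (v s) = 1" "norm (mu s) = 1" "mu s = cross3 (v s) (xi s)" using a n by auto
  show "inner (xi s) (xi s) = 1" "inner (v s) (v s) = 1" "inner (mu s) (mu s) = 1"
    using a n by (simp_all add: dot_square_norm)
  show "inner (xi s) (v s) = 0" "inner (v s) (xi s) = 0" using a by (simp_all add: inner_commute)
  show "inner (xi s) (mu s) = 0" "inner (mu s) (xi s) = 0" "inner (v s) (mu s) = 0" "inner (mu s) (v s) = 0"
    using a dot_cross_self by (simp_all add: inner_commute)
qed

lemma dxi: "s \<in> I \<Longrightarrow> (xi has_vector_derivative (G s *\<^sub>R mu s + K s *\<^sub>R v s)) (at s)"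
  and dmu: "s \<in> I \<Longrightarrow> (mu has_vector_derivative (- G s *\<^sub>R xi s + T s *\<^sub>R v s)) (at s)"
  and dv: "s \<in> I \<Longrightarrow> (v has_vector_derivative (- K s *\<^sub>R xi s - T s *\<^sub>R mu s)) (at s)"
  using M unfolding myller_darboux_def by auto

lemma GK_deriv:
  assumes "s \<in> I"
  shows "(G has_real_derivative deriv G s) (at s)" "(K has_real_derivative deriv K s) (at s)"
proof -
  define X where "X i t = deriv (\<lambda>t. xi t $ i) t" for i t
  have sx: "smooth_vec_on I xi" using M unfolding myller_darboux_def by auto
  have Xd: "X i field_differentiable (at s)" for i
  proof -
    have "smooth_real_on I (\<lambda>t. xi t $ i)" using sx unfolding smooth_vec_on_def by auto
    then have "((deriv ^^ 1) (\<lambda>t. xi t $ i)) field_differentiable (at s)"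
      using assms unfolding smooth_real_on_def by blast
    then show ?thesis unfolding X_def by (simp add: fun_eq_iff)
  qed
  have md: "(\<lambda>t. mu t $ i) field_differentiable (at s)" for i
    using comp_d[OF dmu[OF assms]] field_differentiable_def by blast
  have vd: "(\<lambda>t. v t $ i) field_differentiable (at s)" for i
    using comp_d[OF dv[OF assms]] field_differentiable_def by blast
  have vecX: "vector_derivative xi (at t) $ i = X i t" if "t \<in> I" for t i
  proof -
    have "vector_derivative xi (at t) = G t *\<^sub>R mu t + K t *\<^sub>R v t" using vector_derivative_at[OF dxi[OF that]] .
    moreover have "X i t = (G t *\<^sub>R mu t + K t *\<^sub>R v t) $ i"
      unfolding X_def using DERIV_imp_deriv[OF comp_d[OF dxi[OF that]]] .
    ultimately show ?thesis by simp
  qed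
  define Gf where "Gf t = X 1 t * mu t $ 1 + X 2 t * mu t $ 2 + X 3 t * mu t $ 3" for t
  define Kf where "Kf t = X 1 t * v t $ 1 + X 2 t * v t $ 2 + X 3 t * v t $ 3" for t
  have GGf: "G t = Gf t" if "t \<in> I" for t
  proof -
    have "G t = inner (G t *\<^sub>R mu t + K t *\<^sub>R v t) (mu t)" using orth[OF that] by (simp add: algebra_simps)
    also have "\<dots> = inner (vector_derivative xi (at t)) (mu t)" using vector_derivative_at[OF dxi[OF that]] by simp
    also have "\<dots> = Gf t" unfolding Gf_def inner_vec_def sum_3 using vecX[OF that] by simp
    finally show ?thesis .
  qed
  have KKf: "K t = Kf t" if "t \<in> I" for t
  proof -
    have "K t = inner (G t *\<^sub>R mu t + K t *\<^sub>R v t) (v t)" using orth[OF that] by (simp add: algebra_simps)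
    also have "\<dots> = inner (vector_derivative xi (at t)) (v t)" using vector_derivative_at[OF dxi[OF that]] by simp
    also have "\<dots> = Kf t" unfolding Kf_def inner_vec_def sum_3 using vecX[OF that] by simp
    finally show ?thesis .
  qed
  have "Gf field_differentiable (at s)" unfolding Gf_def
    by (intro field_differentiable_add field_differentiable_mult Xd md)
  then obtain D where D: "(Gf has_real_derivative D) (at s)" using field_differentiable_def by blast
  have "(G has_real_derivative D) (at s)"
    using has_field_derivative_transform_within_open[OF D Iopen assms] GGf by metis
  then show "(G has_real_derivative deriv G s) (at s)" using DERIV_imp_deriv by metis
  have "Kf field_differentiable (at s)" unfolding Kf_def
    by (intro field_differentiable_add field_differentiable_mult Xd vd)
  then obtain D where D: "(Kf has_real_derivative D) (at s)" using field_differentiable_def by blast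
  have "(K has_real_derivative D) (at s)"
    using has_field_derivative_transform_within_open[OF D Iopen assms] KKf by metis
  then show "(K has_real_derivative deriv K s) (at s)" using DERIV_imp_deriv by metis
qed

end


context
  fixes I r xi mu v G K T
  assumes M: "myller_darboux I r xi mu v G K T"
begin

lemma helix_from_W:
  fixes c :: real and \<beta> \<gamma> \<beta>' \<gamma>' :: "real \<Rightarrow> real"
  assumes db: "\<forall>s\<in>I. (\<beta> has_real_derivative \<beta>' s) (at s)"
    and dg: "\<forall>s\<in>I. (\<gamma> has_real_derivative \<gamma>' s) (at s)"
    and e1: "\<forall>s\<in>I. G s * \<beta> s + K s * \<gamma> s = 0"
    and e2: "\<forall>s\<in>I. \<beta>' s = - G s * c + T s * \<gamma> s"
    and e3: "\<forall>s\<in>I. \<gamma>' s = - K s * c - T s * \<beta> s"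
    and s0: "s0 \<in> I" and nz: "\<beta> s0 \<noteq> 0 \<or> \<gamma> s0 \<noteq> 0"
  shows "xi_helix I xi"
proof -
  define W where "W t = c *\<^sub>R xi t + \<beta> t *\<^sub>R mu t + \<gamma> t *\<^sub>R v t" for t
  have "(W has_vector_derivative 0) (at s within I)" if s: "s \<in> I" for s
  proof -
    have "(W has_vector_derivative
        (c *\<^sub>R (G s *\<^sub>R mu s + K s *\<^sub>R v s)
         + (\<beta> s *\<^sub>R (- G s *\<^sub>R xi s + T s *\<^sub>R v s) + \<beta>' s *\<^sub>R mu s)
         + (\<gamma> s *\<^sub>R (- K s *\<^sub>R xi s - T s *\<^sub>R mu s) + \<gamma>' s *\<^sub>R v s))) (at s)"
      unfolding W_def
      by (intro has_vector_derivative_add has_vector_derivative_scaleR has_vector_derivative_scaleR[where f="\<lambda>_. c" and f'=0, simplified]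
          dxi[OF M s] dmu[OF M s] dv[OF M s] db[rule_format, OF s] dg[rule_format, OF s])
    moreover have "(c *\<^sub>R (G s *\<^sub>R mu s + K s *\<^sub>R v s)
         + (\<beta> s *\<^sub>R (- G s *\<^sub>R xi s + T s *\<^sub>R v s) + \<beta>' s *\<^sub>R mu s)
         + (\<gamma> s *\<^sub>R (- K s *\<^sub>R xi s - T s *\<^sub>R mu s) + \<gamma>' s *\<^sub>R v s)) = 0"
    proof -
      have "(c *\<^sub>R (G s *\<^sub>R mu s + K s *\<^sub>R v s)
         + (\<beta> s *\<^sub>R (- G s *\<^sub>R xi s + T s *\<^sub>R v s) + \<beta>' s *\<^sub>R mu s)
         + (\<gamma> s *\<^sub>R (- K s *\<^sub>R xi s - T s *\<^sub>R mu s) + \<gamma>' s *\<^sub>R v s))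
        = (- (G s * \<beta> s + K s * \<gamma> s)) *\<^sub>R xi s + (c * G s + \<beta>' s - T s * \<gamma> s) *\<^sub>R mu s
          + (c * K s + T s * \<beta> s + \<gamma>' s) *\<^sub>R v s"
        by (simp add: vec_eq_iff algebra_simps)
      also have "\<dots> = 0"
        using e1[rule_format, OF s] e2[rule_format, OF s] e3[rule_format, OF s] by simp
      finally show ?thesis .
    qed
    ultimately show ?thesis using has_vector_derivative_at_within by fastforce
  qed
  then obtain Wc where Wc: "\<And>s. s \<in> I \<Longrightarrow> W s = Wc"
    using has_vector_derivative_zero_constant[OF Iconv[OF M]] by metis
  have ip: "inner (xi s) Wc = c" if "s \<in> I" for s
    using orth[OF M that] Wc[OF that, symmetric] unfolding W_def by (simp add: inner_add_right)
  have w1: "inner Wc (\<beta> s0 *\<^sub>R mu s0 + \<gamma> s0 *\<^sub>R v s0) = (\<beta> s0)\<^sup>2 + (\<gamma> s0)\<^sup>2"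
    using orth[OF M s0] Wc[OF s0, symmetric] unfolding W_def
    by (simp add: inner_add_right inner_add_left power2_eq_square inner_commute)
  have w2: "(\<beta> s0)\<^sup>2 + (\<gamma> s0)\<^sup>2 > 0" using nz by (simp add: sum_power2_gt_zero_iff)
  have Wnz: "Wc \<noteq> 0"
  proof
    assume "Wc = 0"
    then have "inner Wc (\<beta> s0 *\<^sub>R mu s0 + \<gamma> s0 *\<^sub>R v s0) = 0" by simp
    then show False using w1 w2 by simp
  qed
  have cb: "\<bar>c\<bar> \<le> norm Wc"
  proof -
    have "\<bar>inner (xi s0) Wc\<bar> \<le> norm (xi s0) * norm Wc" by (rule Cauchy_Schwarz_ineq2)
    then show ?thesis using ip[OF s0] orth(1)[OF M s0] by simp
  qed
  define d where "d = Wc /\<^sub>R norm Wc"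
  have nW: "norm Wc > 0" using Wnz by simp
  have nd: "norm d = 1" using Wnz unfolding d_def by simp
  have "\<bar>c\<bar> / norm Wc \<le> 1" using cb nW by (simp add: divide_le_eq_1)
  then have "\<bar>c / norm Wc\<bar> \<le> 1" by (simp add: abs_divide)
  then have "-1 \<le> c / norm Wc \<and> c / norm Wc \<le> 1" by arith
  then have cc: "cos (arccos (c / norm Wc)) = c / norm Wc" by (intro cos_arccos) auto
  have "inner (xi s) d = c / norm Wc" if "s \<in> I" for s
    using ip[OF that] unfolding d_def by (simp add: divide_inverse mult.commute)
  then show ?thesis unfolding xi_helix_def
    using nd cc by (intro exI[of _ d] exI[of _ "arccos (c / norm Wc)"]) simp
qed

lemma helix_data:
  assumes "xi_helix I xi"
  obtains a p q where
    "\<forall>s\<in>I. (p has_real_derivative (- G s * a + T s * q s)) (at s)"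
    "\<forall>s\<in>I. (q has_real_derivative (- K s * a - T s * p s)) (at s)"
    "\<forall>s\<in>I. G s * p s + K s * q s = 0"
    "\<forall>s\<in>I. a \<noteq> 0 \<or> p s \<noteq> 0 \<or> q s \<noteq> 0"
proof -
  obtain d \<theta> where d: "norm d = 1" "\<forall>s\<in>I. inner (xi s) d = cos \<theta>"
    using assms unfolding xi_helix_def by blast
  define a where "a = cos \<theta>"
  define p where "p t = inner (mu t) d" for t
  define q where "q t = inner (v t) d" for t
  have 1: "\<forall>s\<in>I. (p has_real_derivative (- G s * a + T s * q s)) (at s)"
  proof
    fix s assume s: "s \<in> I"
    show "(p has_real_derivative (- G s * a + T s * q s)) (at s)"
      using inner_d[OF dmu[OF M s], of d] d(2) s unfolding p_def q_def a_def
      by (simp add: inner_add_left inner_diff_left)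
  qed
  have 2: "\<forall>s\<in>I. (q has_real_derivative (- K s * a - T s * p s)) (at s)"
  proof
    fix s assume s: "s \<in> I"
    show "(q has_real_derivative (- K s * a - T s * p s)) (at s)"
      using inner_d[OF dv[OF M s], of d] d(2) s unfolding p_def q_def a_def
      by (simp add: inner_add_left inner_diff_left)
  qed
  have 3: "\<forall>s\<in>I. G s * p s + K s * q s = 0"
  proof
    fix s assume s: "s \<in> I"
    have "((\<lambda>t. inner (xi t) d) has_real_derivative G s * p s + K s * q s) (at s)"
      using inner_d[OF dxi[OF M s], of d] unfolding p_def q_def
      by (simp add: inner_add_left)
    moreover have "((\<lambda>t. a) has_real_derivative 0) (at s)" by simp
    ultimately show "G s * p s + K s * q s = 0"
      using deriv_unique_on[OF Iopen[OF M] s, of "\<lambda>t. inner (xi t) d" "\<lambda>t. a"] d(2) unfolding a_def by auto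
  qed
  have 4: "\<forall>s\<in>I. a \<noteq> 0 \<or> p s \<noteq> 0 \<or> q s \<noteq> 0"
  proof (rule ballI, rule ccontr)
    fix s assume s: "s \<in> I" and h: "\<not> (a \<noteq> 0 \<or> p s \<noteq> 0 \<or> q s \<noteq> 0)"
    have i1: "inner d (xi s) = 0" using h d(2) s unfolding a_def by (simp add: inner_commute)
    have i2: "inner d (v s) = 0" using h unfolding q_def by (simp add: inner_commute)
    have i3: "inner d (cross3 (v s) (xi s)) = 0" using h orth(13)[OF M s] unfolding p_def by (simp add: inner_commute)
    have "d = 0" by (rule span3[OF orth(1,2,7)[OF M s] i1 i2 i3])
    then show False using d(1) by simp
  qed
  show ?thesis using that 1 2 3 4 by blast
qed

end


lemma alg1:
  fixes a b g k r :: real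
  assumes rr: "r * r = a * a + b * b" and rp: "r > 0"
  shows "(k * r - b * (inverse r / 2 * (g * a + g * a + (k * b + k * b)))) / (r * r) = a * ((a * k - g * b) / ((a * a + b * b) * r))"
proof -
  have "k * r - b * (inverse r / 2 * (g * a + g * a + (k * b + k * b))) = (k * (r * r) - b * (g * a + k * b)) / r"
    using rp by (simp add: field_simps)
  also have "\<dots> = a * (a * k - g * b) / r" unfolding rr by (simp add: algebra_simps)
  finally show ?thesis unfolding rr[symmetric] using rp by (simp add: field_simps)
qed
lemma alg2:
  fixes a b g k r :: real
  assumes rr: "r * r = a * a + b * b" and rp: "r > 0"
  shows "(g * r - a * (inverse r / 2 * (g * a + g * a + (k * b + k * b)))) / (r * r) = - b * ((a * k - g * b) / ((a * a + b * b) * r))"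
proof -
  have "g * r - a * (inverse r / 2 * (g * a + g * a + (k * b + k * b))) = (g * (r * r) - a * (g * a + k * b)) / r"
    using rp by (simp add: field_simps)
  also have "\<dots> = - b * (a * k - g * b) / r" unfolding rr by (simp add: algebra_simps)
  finally show ?thesis unfolding rr[symmetric] using rp by (simp add: field_simps)
qed

definition kap :: "(real \<Rightarrow> real) \<Rightarrow> (real \<Rightarrow> real) \<Rightarrow> real \<Rightarrow> real" where
  "kap G K t = sqrt (G t * G t + K t * K t)"

definition sig :: "(real \<Rightarrow> real) \<Rightarrow> (real \<Rightarrow> real) \<Rightarrow> real \<Rightarrow> real" where
  "sig G K s = - (deriv G s * K s - G s * deriv K s) / ((G s)\<^sup>2 + (K s)\<^sup>2) powr (3/2)"

lemma kap_derivs: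
  fixes G K :: "real \<Rightarrow> real"
  assumes dG: "(G has_real_derivative g) (at s)" and dK: "(K has_real_derivative k) (at s)"
    and nz: "(G s, K s) \<noteq> (0, 0)"
  shows "((\<lambda>t. K t / kap G K t) has_real_derivative G s * ((G s * k - g * K s) / ((G s * G s + K s * K s) * kap G K s))) (at s)"
    "((\<lambda>t. G t / kap G K t) has_real_derivative - K s * ((G s * k - g * K s) / ((G s * G s + K s * K s) * kap G K s))) (at s)"
proof -
  define N where "N = G s * G s + K s * K s"
  have Npos: "N > 0" using nz unfolding N_def
    by (auto simp: sum_squares_gt_zero_iff)
  define r where "r = sqrt N"
  have rpos: "r > 0" and rr: "r * r = N" using Npos unfolding r_def by auto
  have dN: "((\<lambda>t. G t * G t + K t * K t) has_real_derivative (g * G s + g * G s) + (k * K s + k * K s)) (at s)"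
    by (intro DERIV_add DERIV_mult[OF dG dG] DERIV_mult[OF dK dK])
  have dr: "(kap G K has_real_derivative (inverse r / 2) * ((g * G s + g * G s) + (k * K s + k * K s))) (at s)"
    unfolding kap_def[abs_def] r_def using DERIV_chain2[OF DERIV_real_sqrt[OF Npos[unfolded N_def]] dN] by (simp add: N_def)
  have ks: "kap G K s = r" unfolding kap_def r_def N_def by simp
  show "((\<lambda>t. K t / kap G K t) has_real_derivative G s * ((G s * k - g * K s) / ((G s * G s + K s * K s) * kap G K s))) (at s)"
  proof (rule DERIV_cong[OF DERIV_divide[OF dK dr]])
    show "kap G K s \<noteq> 0" using ks rpos by simp
    show "(k * kap G K s - K s * (inverse r / 2 * (g * G s + g * G s + (k * K s + k * K s)))) / (kap G K s * kap G K s) =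
      G s * ((G s * k - g * K s) / ((G s * G s + K s * K s) * kap G K s))"
      unfolding ks by (rule alg1[OF rr[unfolded N_def] rpos])
  qed
  show "((\<lambda>t. G t / kap G K t) has_real_derivative - K s * ((G s * k - g * K s) / ((G s * G s + K s * K s) * kap G K s))) (at s)"
  proof (rule DERIV_cong[OF DERIV_divide[OF dG dr]])
    show "kap G K s \<noteq> 0" using ks rpos by simp
    show "(g * kap G K s - G s * (inverse r / 2 * (g * G s + g * G s + (k * K s + k * K s)))) / (kap G K s * kap G K s) =
      - K s * ((G s * k - g * K s) / ((G s * G s + K s * K s) * kap G K s))"
      unfolding ks by (rule alg2[OF rr[unfolded N_def] rpos])
  qed
qed

lemma sig_eq:
  assumes "(G s, K s) \<noteq> (0, 0)"
  shows "sig G K s = (G s * deriv K s - deriv G s * K s) / ((G s * G s + K s * K s) * kap G K s)"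
proof -
  define N where "N = G s * G s + K s * K s"
  have Npos: "N > 0" using assms unfolding N_def
    by (auto simp: sum_squares_gt_zero_iff)
  have "N powr (3/2) = N powr (1 + 1/2)" by simp
  also have "\<dots> = N powr 1 * N powr (1/2)" by (rule powr_add)
  also have "\<dots> = N * sqrt N" using Npos by (simp add: powr_half_sqrt)
  finally have "((G s)\<^sup>2 + (K s)\<^sup>2) powr (3/2) = N * kap G K s"
    unfolding kap_def N_def by (simp add: power2_eq_square)
  then show ?thesis unfolding sig_def N_def by (simp add: algebra_simps minus_divide_left)
qed



theorem corollary8:
  fixes I :: "real set" and r xi mu v :: "real \<Rightarrow> real^3" and G K T :: "real \<Rightarrow> real"
  assumes M: "myller_darboux I r xi mu v G K T"
    and nz: "\<forall>s\<in>I. (G s, K s) \<noteq> (0, 0)"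
  shows "((\<forall>s\<in>I. K s = 0) \<longrightarrow>
            (xi_helix I xi \<longleftrightarrow> (\<exists>c. \<forall>s\<in>I. T s / G s = c)))
       \<and> ((\<forall>s\<in>I. G s = 0) \<longrightarrow>
            (xi_helix I xi \<longleftrightarrow> (\<exists>c. \<forall>s\<in>I. T s / K s = c)))
       \<and> ((\<forall>s\<in>I. T s = 0) \<longrightarrow>
            (xi_helix I xi \<longleftrightarrow>
               (\<exists>c. \<forall>s\<in>I. - (deriv G s * K s - G s * deriv K s) / ((G s)\<^sup>2 + (K s)\<^sup>2) powr (3/2) = c)))"
proof -
  have Io: "open I" and Ic: "convex I" using Iopen[OF M] Iconv[OF M] .
  obtain s0 where s0: "s0 \<in> I" using Ine[OF M] by blast
  have const0: "\<And>s. ((\<lambda>t. 0::real) has_real_derivative 0) (at s)" by simp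
  have const1: "\<And>s. ((\<lambda>t. 1::real) has_real_derivative 0) (at s)" by simp
  have constm1: "\<And>s. ((\<lambda>t. -1::real) has_real_derivative 0) (at s)" by simp
  show ?thesis
  proof (intro conjI impI)
    assume K0: "\<forall>s\<in>I. K s = 0"
    have Gnz: "\<forall>s\<in>I. G s \<noteq> 0" using nz K0 by auto
    show "xi_helix I xi \<longleftrightarrow> (\<exists>c. \<forall>s\<in>I. T s / G s = c)"
    proof
      assume H: "xi_helix I xi"
      obtain a p q where dp: "\<forall>s\<in>I. (p has_real_derivative (- G s * a + T s * q s)) (at s)"
        and dq: "\<forall>s\<in>I. (q has_real_derivative (- K s * a - T s * p s)) (at s)"
        and e: "\<forall>s\<in>I. G s * p s + K s * q s = 0"
        and n4: "\<forall>s\<in>I. a \<noteq> 0 \<or> p s \<noteq> 0 \<or> q s \<noteq> 0"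
        using helix_data[OF M H] by metis
      have p0: "\<forall>s\<in>I. p s = 0" using e K0 Gnz by auto
      have e2: "- G s * a + T s * q s = 0" if s: "s \<in> I" for s
        by (rule deriv_unique_on[OF Io s _ dp[rule_format, OF s] const0]) (use p0 in auto)
      have "\<forall>s\<in>I. (q has_real_derivative 0) (at s)" using dq K0 p0 by auto
      then obtain b where qb: "\<forall>s\<in>I. q s = b" using zero_deriv_const[OF Ic] by blast
      have bnz: "b \<noteq> 0"
      proof
        assume "b = 0"
        then have "a \<noteq> 0" using n4 p0 qb s0 by auto
        moreover have "G s0 * a = 0" using e2[OF s0] qb s0 \<open>b = 0\<close> by simp
        ultimately show False using Gnz s0 by simp
      qed
      have "\<forall>s\<in>I. T s / G s = a / b"
      proof
        fix s assume s: "s \<in> I"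
        have "T s * b = G s * a" using e2[OF s] qb s by simp
        then show "T s / G s = a / b" using bnz Gnz s by (simp add: field_simps)
      qed
      then show "\<exists>c. \<forall>s\<in>I. T s / G s = c" by blast
    next
      assume "\<exists>c. \<forall>s\<in>I. T s / G s = c"
      then obtain c where c: "\<forall>s\<in>I. T s / G s = c" by blast
      have Tc: "\<forall>s\<in>I. T s = c * G s" using c Gnz by (auto simp: field_simps)
      show "xi_helix I xi"
        by (rule helix_from_W[OF M, of "\<lambda>_. 0" "\<lambda>_. 0" "\<lambda>_. 1" "\<lambda>_. 0" c s0])
           (use const0 const1 K0 Tc s0 in auto)
    qed
  next
    assume G0: "\<forall>s\<in>I. G s = 0"
    have Knz: "\<forall>s\<in>I. K s \<noteq> 0" using nz G0 by auto
    show "xi_helix I xi \<longleftrightarrow> (\<exists>c. \<forall>s\<in>I. T s / K s = c)"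
    proof
      assume H: "xi_helix I xi"
      obtain a p q where dp: "\<forall>s\<in>I. (p has_real_derivative (- G s * a + T s * q s)) (at s)"
        and dq: "\<forall>s\<in>I. (q has_real_derivative (- K s * a - T s * p s)) (at s)"
        and e: "\<forall>s\<in>I. G s * p s + K s * q s = 0"
        and n4: "\<forall>s\<in>I. a \<noteq> 0 \<or> p s \<noteq> 0 \<or> q s \<noteq> 0"
        using helix_data[OF M H] by metis
      have q0: "\<forall>s\<in>I. q s = 0" using e G0 Knz by auto
      have e2: "- K s * a - T s * p s = 0" if s: "s \<in> I" for s
        by (rule deriv_unique_on[OF Io s _ dq[rule_format, OF s] const0]) (use q0 in auto)
      have "\<forall>s\<in>I. (p has_real_derivative 0) (at s)" using dp G0 q0 by auto
      then obtain b where pb: "\<forall>s\<in>I. p s = b" using zero_deriv_const[OF Ic] by blast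
      have bnz: "b \<noteq> 0"
      proof
        assume "b = 0"
        then have "a \<noteq> 0" using n4 q0 pb s0 by auto
        moreover have "K s0 * a = 0" using e2[OF s0] pb s0 \<open>b = 0\<close> by simp
        ultimately show False using Knz s0 by simp
      qed
      have "\<forall>s\<in>I. T s / K s = - a / b"
      proof
        fix s assume s: "s \<in> I"
        have "T s * b = - K s * a" using e2[OF s] pb s by simp
        then show "T s / K s = - a / b" using bnz Knz s by (simp add: field_simps)
      qed
      then show "\<exists>c. \<forall>s\<in>I. T s / K s = c" by blast
    next
      assume "\<exists>c. \<forall>s\<in>I. T s / K s = c"
      then obtain c where c: "\<forall>s\<in>I. T s / K s = c" by blast
      have Tc: "\<forall>s\<in>I. T s = c * K s" using c Knz by (auto simp: field_simps)
      show "xi_helix I xi"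
        by (rule helix_from_W[OF M, of "\<lambda>_. -1" "\<lambda>_. 0" "\<lambda>_. 0" "\<lambda>_. 0" c s0])
           (use constm1 const0 G0 Tc s0 in auto)
    qed
  next
    assume T0: "\<forall>s\<in>I. T s = 0"
    have dKk: "((\<lambda>t. K t / kap G K t) has_real_derivative G s * sig G K s) (at s)"
      and dGk: "((\<lambda>t. G t / kap G K t) has_real_derivative - K s * sig G K s) (at s)" if s: "s \<in> I" for s
      using kap_derivs[OF GK_deriv[OF M s] nz[rule_format, OF s]] sig_eq[of G s K, OF nz[rule_format, OF s]] by auto
    have kpos: "kap G K s > 0" and kk: "kap G K s * kap G K s = G s * G s + K s * K s" if s: "s \<in> I" for s
    proof -
      have "G s * G s + K s * K s > 0" using nz s by (auto simp: sum_squares_gt_zero_iff)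
      then show "kap G K s > 0" "kap G K s * kap G K s = G s * G s + K s * K s" unfolding kap_def by auto
    qed
    show "xi_helix I xi \<longleftrightarrow>
               (\<exists>c. \<forall>s\<in>I. - (deriv G s * K s - G s * deriv K s) / ((G s)\<^sup>2 + (K s)\<^sup>2) powr (3/2) = c)"
      unfolding sig_def[symmetric]
    proof
      assume H: "xi_helix I xi"
      obtain a p q where dp: "\<forall>s\<in>I. (p has_real_derivative (- G s * a + T s * q s)) (at s)"
        and dq: "\<forall>s\<in>I. (q has_real_derivative (- K s * a - T s * p s)) (at s)"
        and e: "\<forall>s\<in>I. G s * p s + K s * q s = 0"
        and n4: "\<forall>s\<in>I. a \<noteq> 0 \<or> p s \<noteq> 0 \<or> q s \<noteq> 0"
        using helix_data[OF M H] by metis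
      have dp': "(p has_real_derivative (- G s * a)) (at s)" and dq': "(q has_real_derivative (- K s * a)) (at s)"
        if s: "s \<in> I" for s using dp dq T0 s by auto
      have "\<forall>s\<in>I. ((\<lambda>t. p t * p t + q t * q t) has_real_derivative 0) (at s)"
      proof
        fix s assume s: "s \<in> I"
        show "((\<lambda>t. p t * p t + q t * q t) has_real_derivative 0) (at s)"
          by (rule DERIV_cong[OF DERIV_add[OF DERIV_mult[OF dp'[OF s] dp'[OF s]] DERIV_mult[OF dq'[OF s] dq'[OF s]]]])
             (use e s in \<open>simp add: algebra_simps eq_neg_iff_add_eq_0[symmetric]\<close>)
      qed
      then obtain m where m: "\<forall>s\<in>I. p s * p s + q s * q s = m" using zero_deriv_const[OF Ic] by blast
      have mnz: "m \<noteq> 0"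
      proof
        assume "m = 0"
        then have pq0: "\<forall>s\<in>I. p s = 0 \<and> q s = 0" using m by (auto simp: sum_squares_eq_zero_iff)
        have "- G s0 * a = 0" by (rule deriv_unique_on[OF Io s0 _ dp'[OF s0] const0]) (use pq0 in auto)
        moreover have "- K s0 * a = 0" by (rule deriv_unique_on[OF Io s0 _ dq'[OF s0] const0]) (use pq0 in auto)
        ultimately have "a = 0" using nz s0 by auto
        then show False using n4 pq0 s0 by auto
      qed
      define lam where "lam t = p t * (K t / kap G K t) - q t * (G t / kap G K t)" for t
      have lamsq: "lam s * lam s = m" if s: "s \<in> I" for s
      proof -
        have "(p s * K s - q s * G s) * (p s * K s - q s * G s) = (p s * p s + q s * q s) * (G s * G s + K s * K s) - (G s * p s + K s * q s) * (G s * p s + K s * q s)"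
          by (simp add: algebra_simps)
        also have "\<dots> = m * (kap G K s * kap G K s)" using m e s kk[OF s] by simp
        finally have "(p s * K s - q s * G s) * (p s * K s - q s * G s) = m * (kap G K s * kap G K s)" .
        moreover have "lam s = (p s * K s - q s * G s) / kap G K s" unfolding lam_def by (simp add: diff_divide_distrib ac_simps)
        ultimately have "lam s * lam s = (m * (kap G K s * kap G K s)) / (kap G K s * kap G K s)"
          by simp
        then show ?thesis using kpos[OF s] by simp
      qed
      have "\<forall>s\<in>I. (lam has_real_derivative 0) (at s)"
      proof
        fix s assume s: "s \<in> I"
        obtain L where L: "(lam has_real_derivative L) (at s)"
          unfolding lam_def[abs_def] using DERIV_diff[OF DERIV_mult[OF dp'[OF s] dKk[OF s]] DERIV_mult[OF dq'[OF s] dGk[OF s]]] by blast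
        have "L * lam s + L * lam s = 0"
          by (rule deriv_unique_on[OF Io s _ DERIV_mult[OF L L] DERIV_const]) (use lamsq in auto)
        moreover have "lam s \<noteq> 0" using lamsq[OF s] mnz by auto
        ultimately have "L = 0" by simp
        then show "(lam has_real_derivative 0) (at s)" using L by simp
      qed
      then obtain l where l: "\<forall>s\<in>I. lam s = l" using zero_deriv_const[OF Ic] by blast
      have lnz: "l \<noteq> 0" using lamsq[OF s0] l s0 mnz by auto
      have pl: "p s = l * (K s / kap G K s)" and ql: "q s = - l * (G s / kap G K s)" if s: "s \<in> I" for s
      proof -
        have k0: "kap G K s \<noteq> 0" using kpos[OF s] by simp
        have ep: "G s * p s = - K s * q s" using e s by (simp add: eq_neg_iff_add_eq_0)
        have "l * (K s / kap G K s) = (p s * K s * K s - q s * G s * K s) / (kap G K s * kap G K s)"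
          using l s k0 unfolding lam_def by (auto simp: field_simps)
        also have "\<dots> = p s * (G s * G s + K s * K s) / (kap G K s * kap G K s)"
          using ep by (simp add: algebra_simps)
        also have "\<dots> = p s" unfolding kk[OF s, symmetric] using k0 by simp
        finally show "p s = l * (K s / kap G K s)" by simp
        have "- l * (G s / kap G K s) = - (p s * K s * G s - q s * G s * G s) / (kap G K s * kap G K s)"
          using l s k0 unfolding lam_def by (auto simp: field_simps)
        also have "\<dots> = q s * (G s * G s + K s * K s) / (kap G K s * kap G K s)"
        proof -
          have "p s * K s * G s = K s * (G s * p s)" by (simp add: ac_simps)
          also have "\<dots> = - (q s * K s * K s)" unfolding ep by (simp add: ac_simps)
          finally have "p s * K s * G s = - (q s * K s * K s)" .
          then show ?thesis by (simp add: algebra_simps)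
        qed
        also have "\<dots> = q s" unfolding kk[OF s, symmetric] using k0 by simp
        finally show "q s = - l * (G s / kap G K s)" by simp
      qed
      have "\<forall>s\<in>I. sig G K s = - a / l"
      proof
        fix s assume s: "s \<in> I"
        have 1: "- G s * a = l * (G s * sig G K s)"
          using deriv_unique_on[OF Io s, of p "\<lambda>t. l * (K t / kap G K t)"] pl dp'[OF s] DERIV_cmult[OF dKk[OF s], of l] s by auto
        have 2: "- K s * a = - l * (- K s * sig G K s)"
          using deriv_unique_on[OF Io s, of q "\<lambda>t. - l * (G t / kap G K t)"] ql dq'[OF s] DERIV_cmult[OF dGk[OF s], of "- l"] s by auto
        have "G s * (a + l * sig G K s) = 0" "K s * (a + l * sig G K s) = 0"
          using 1 2 by (simp_all add: algebra_simps)
        then have "a + l * sig G K s = 0" using nz s by auto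
        then show "sig G K s = - a / l" using lnz by (simp add: field_simps)
      qed
      then show "\<exists>c. \<forall>s\<in>I. sig G K s = c" by blast
    next
      assume "\<exists>c. \<forall>s\<in>I. sig G K s = c"
      then obtain c where c: "\<forall>s\<in>I. sig G K s = c" by blast
      show "xi_helix I xi"
      proof (rule helix_from_W[OF M, of "\<lambda>t. - (K t / kap G K t)" "\<lambda>s. - (G s * sig G K s)"
            "\<lambda>t. G t / kap G K t" "\<lambda>s. - K s * sig G K s" c s0])
        show "\<forall>s\<in>I. ((\<lambda>t. - (K t / kap G K t)) has_real_derivative - (G s * sig G K s)) (at s)"
          using dKk by (auto intro: DERIV_minus)
        show "\<forall>s\<in>I. ((\<lambda>t. G t / kap G K t) has_real_derivative - K s * sig G K s) (at s)"
          using dGk by auto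
        show "\<forall>s\<in>I. G s * - (K s / kap G K s) + K s * (G s / kap G K s) = 0"
          by (simp add: field_simps)
        show "\<forall>s\<in>I. - (G s * sig G K s) = - G s * c + T s * (G s / kap G K s)" using c T0 by auto
        show "\<forall>s\<in>I. - K s * sig G K s = - K s * c - T s * - (K s / kap G K s)" using c T0 by auto
        show "s0 \<in> I" by (rule s0)
        show "- (K s0 / kap G K s0) \<noteq> 0 \<or> G s0 / kap G K s0 \<noteq> 0"
          using nz s0 kpos[OF s0] by auto
      qed
    qed
  qed
qed


end
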